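(* Let $\Bbbk$ be a field with $\operatorname{char}\Bbbk\ne2$, $X$ a set, $z\in X$, and let $f\in\mathrm{DiAs}_z\langle X\rangle$. Then $f\in\mathrm{DiSJ}\langle X\rangle$ if and only if $\bar f\in\mathrm{SJ}\langle X\rangle$.
   Context: $\mathrm{As}\langle X\rangle$ is the free associative algebra; $\mathrm{SJ}\langle X\rangle$ is the subalgebra of $\mathrm{As}\langle X\rangle^{(+)}$ (product $a\circ b=\tfrac12(ab+ba)$) generated by $X$. An associative dialgebra is a vector space with bilinear $\vdash,\dashv$ satisfying $(x\dashv y)\vdash z=(x\vdash y)\vdash z$, $x\dashv(y\vdash z)=x\dashv(y\dashv z)$, $(x\vdash y)\vdash z=x\vdash(y\vdash z)$, $(x\dashv y)\dashv z=x\dashv(y\dashv z)$, $(x\vdash y)\dashv z=x\vdash(y\dashv z)$. $\mathrm{DiAs}\langle X\rangle$ is the free associative dialgebra, with basis the words $x_1\cdots\dot x_k\cdots x_n$ ($x_1\vdash\cdots\vdash x_k\dashv\cdots\dashv x_n$; $x_k$ is the central letter). $\mathrm{DiAs}_z\langle X\rangle$ is the span of those basis words that contain $z$ exactly once with $z$ as central letter. For $f\in\mathrm{DiAs}\langle X\rangle$, $\bar f\in\mathrm{As}\langle X\rangle$ is the image under the map erasing the dot (identifying $\vdash,\dashv$ with the associative product). $\mathrm{DiSJ}\langle X\rangle$ is the subdialgebra of $\mathrm{DiAs}\langle X\rangle^{(+)}$ generated by $X$, where $a\vdash_+b=\tfrac12(a\vdash b+b\dashv a)$, $a\dashv_+b=\tfrac12(a\dashv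 b+b\vdash a)$. *)

theory Defs
  imports Main
begin

text \<open>Elements of the free associative algebra As<X> over a field 'k are represented
as functions from words ('x list) to coefficients (finitely supported ones are the
actual elements; generated elements are automatically finitely supported).
Elements of the free associative dialgebra DiAs<X> are functions on pairs (w, k),
where (w, k) with k < length w stands for the basis word w with central letter w!k.\<close>

type_synonym ('x, 'k) as_elem = "'x list \<Rightarrow> 'k"
type_synonym ('x, 'k) dias_elem = "'x list \<times> nat \<Rightarrow> 'k"

definition as_letter :: "'x \<Rightarrow> ('x, 'k::field) as_elem" where
  "as_letter x = (\<lambda>w. if w = [x] then 1 else 0)"

definition as_add :: "('x, 'k::field) as_elem \<Rightarrow> ('x, 'k) as_elem \<Rightarrow> ('x, 'k) as_elem" where
  "as_add a b = (\<lambda>w. a w + b w)"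

definition as_smult :: "'k::field \<Rightarrow> ('x, 'k) as_elem \<Rightarrow> ('x, 'k) as_elem" where
  "as_smult c a = (\<lambda>w. c * a w)"

definition as_mult :: "('x, 'k::field) as_elem \<Rightarrow> ('x, 'k) as_elem \<Rightarrow> ('x, 'k) as_elem" where
  "as_mult a b = (\<lambda>w. \<Sum>n\<le>length w. a (take n w) * b (drop n w))"

definition as_jordan :: "('x, 'k::field) as_elem \<Rightarrow> ('x, 'k) as_elem \<Rightarrow> ('x, 'k) as_elem" where
  "as_jordan a b = as_smult (1/2) (as_add (as_mult a b) (as_mult b a))"

inductive_set SJ :: "'x set \<Rightarrow> ('x, 'k::field) as_elem set" for X :: "'x set" where
  SJ_gen: "x \<in> X \<Longrightarrow> as_letter x \<in> SJ X"
| SJ_zero: "(\<lambda>w. 0) \<in> SJ X"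
| SJ_add: "a \<in> SJ X \<Longrightarrow> b \<in> SJ X \<Longrightarrow> as_add a b \<in> SJ X"
| SJ_smult: "a \<in> SJ X \<Longrightarrow> as_smult c a \<in> SJ X"
| SJ_jordan: "a \<in> SJ X \<Longrightarrow> b \<in> SJ X \<Longrightarrow> as_jordan a b \<in> SJ X"

definition di_letter :: "'x \<Rightarrow> ('x, 'k::field) dias_elem" where
  "di_letter x = (\<lambda>p. if p = ([x], 0) then 1 else 0)"

definition di_add :: "('x, 'k::field) dias_elem \<Rightarrow> ('x, 'k) dias_elem \<Rightarrow> ('x, 'k) dias_elem" where
  "di_add a b = (\<lambda>p. a p + b p)"

definition di_smult :: "'k::field \<Rightarrow> ('x, 'k) dias_elem \<Rightarrow> ('x, 'k) dias_elem" where
  "di_smult c a = (\<lambda>p. c * a p)"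

text \<open>Left product: (u, i) |- (v, j) = (u @ v, length u + j) (central letter from the right factor).\<close>
definition di_vdash :: "('x, 'k::field) dias_elem \<Rightarrow> ('x, 'k) dias_elem \<Rightarrow> ('x, 'k) dias_elem" where
  "di_vdash a b = (\<lambda>(w, k). \<Sum>n\<le>length w.
      if n \<le> k \<and> k < length w then (\<Sum>i<n. a (take n w, i)) * b (drop n w, k - n) else 0)"

text \<open>Right product: (u, i) -| (v, j) = (u @ v, i) (central letter from the left factor).\<close>
definition di_dashv :: "('x, 'k::field) dias_elem \<Rightarrow> ('x, 'k) dias_elem \<Rightarrow> ('x, 'k) dias_elem" where
  "di_dashv a b = (\<lambda>(w, k). \<Sum>n\<le>length w.
      if k < n then a (take n w, k) * (\<Sum>j<length w - n. b (drop n w, j)) else 0)"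

definition di_vdash_plus :: "('x, 'k::field) dias_elem \<Rightarrow> ('x, 'k) dias_elem \<Rightarrow> ('x, 'k) dias_elem" where
  "di_vdash_plus a b = di_smult (1/2) (di_add (di_vdash a b) (di_dashv b a))"

definition di_dashv_plus :: "('x, 'k::field) dias_elem \<Rightarrow> ('x, 'k) dias_elem \<Rightarrow> ('x, 'k) dias_elem" where
  "di_dashv_plus a b = di_smult (1/2) (di_add (di_dashv a b) (di_vdash b a))"

inductive_set DiSJ :: "'x set \<Rightarrow> ('x, 'k::field) dias_elem set" for X :: "'x set" where
  DiSJ_gen: "x \<in> X \<Longrightarrow> di_letter x \<in> DiSJ X"
| DiSJ_zero: "(\<lambda>p. 0) \<in> DiSJ X"
| DiSJ_add: "a \<in> DiSJ X \<Longrightarrow> b \<in> DiSJ X \<Longrightarrow> di_add a b \<in> DiSJ X"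
| DiSJ_smult: "a \<in> DiSJ X \<Longrightarrow> di_smult c a \<in> DiSJ X"
| DiSJ_vdash: "a \<in> DiSJ X \<Longrightarrow> b \<in> DiSJ X \<Longrightarrow> di_vdash_plus a b \<in> DiSJ X"
| DiSJ_dashv: "a \<in> DiSJ X \<Longrightarrow> b \<in> DiSJ X \<Longrightarrow> di_dashv_plus a b \<in> DiSJ X"

definition DiAs_z :: "'x set \<Rightarrow> 'x \<Rightarrow> ('x, 'k::field) dias_elem set" where
  "DiAs_z X z = {f. finite {p. f p \<noteq> 0} \<and>
     (\<forall>w k. f (w, k) \<noteq> 0 \<longrightarrow> set w \<subseteq> X \<and> k < length w \<and> w ! k = z \<and> count_list w z = 1)}"

definition dibar :: "('x, 'k::field) dias_elem \<Rightarrow> ('x, 'k) as_elem" where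
  "dibar f = (\<lambda>w. \<Sum>k<length w. f (w, k))"

end

theory Submission imports Defs begin

definition cz :: "'x \<Rightarrow> 'x list \<Rightarrow> nat \<Rightarrow> bool" where
  "cz z w k \<longleftrightarrow> k < length w \<and> w!k = z \<and> (\<forall>i<length w. w!i = z \<longrightarrow> i = k)"

lemma cz_right:
  assumes "n \<le> k" "n \<le> length w"
  shows "cz z w k \<longleftrightarrow> z \<notin> set (take n w) \<and> cz z (drop n w) (k - n)"
proof
  assume c: "cz z w k"
  have "z \<notin> set (take n w)"
  proof
    assume "z \<in> set (take n w)"
    then obtain i where "i < length (take n w)" "take n w ! i = z" by (auto simp: in_set_conv_nth)
    then have "i < length w" "w ! i = z" "i < n" by auto
    then have "i = k" using c unfolding cz_def by blast
    with \<open>i < n\<close> assms show False by simp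
  qed
  moreover have "cz z (drop n w) (k - n)" unfolding cz_def
  proof (intro conjI allI impI)
    show "k - n < length (drop n w)" using c assms unfolding cz_def by auto
    show "drop n w ! (k - n) = z" using c assms unfolding cz_def by auto
    fix i assume "i < length (drop n w)" "drop n w ! i = z"
    then have "n + i < length w" "w ! (n + i) = z" using assms by auto
    then have "n + i = k" using c unfolding cz_def by blast
    then show "i = k - n" by simp
  qed
  ultimately show "z \<notin> set (take n w) \<and> cz z (drop n w) (k - n)" by simp
next
  assume h: "z \<notin> set (take n w) \<and> cz z (drop n w) (k - n)"
  show "cz z w k" unfolding cz_def
  proof (intro conjI allI impI)
    show "k < length w" using h assms unfolding cz_def by auto
    show "w ! k = z" using h assms unfolding cz_def by auto
    fix i assume i: "i < length w" "w ! i = z"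
    show "i = k"
    proof (cases "i < n")
      case True
      then have "z \<in> set (take n w)" using i by (metis in_set_conv_nth length_take min.absorb2 assms(2) nth_take)
      then show ?thesis using h by simp
    next
      case False
      then have "drop n w ! (i - n) = z" using i assms by simp
      moreover have "i - n < length (drop n w)" using i False by simp
      ultimately have "i - n = k - n" using h unfolding cz_def by blast
      then show ?thesis using False assms by simp
    qed
  qed
qed

lemma cz_left:
  assumes "k < n" "n \<le> length w"
  shows "cz z w k \<longleftrightarrow> cz z (take n w) k \<and> z \<notin> set (drop n w)"
proof
  assume c: "cz z w k"
  have "z \<notin> set (drop n w)"
  proof
    assume "z \<in> set (drop n w)"
    then obtain i where "i < length (drop n w)" "drop n w ! i = z" by (auto simp: in_set_conv_nth)
    then have "n + i < length w" "w ! (n + i) = z" using assms by auto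
    then have "n + i = k" using c unfolding cz_def by blast
    with assms show False by simp
  qed
  moreover have "cz z (take n w) k" unfolding cz_def
  proof (intro conjI allI impI)
    show "k < length (take n w)" using c assms unfolding cz_def by auto
    show "take n w ! k = z" using c assms unfolding cz_def by auto
    fix i assume "i < length (take n w)" "take n w ! i = z"
    then have "i < length w" "w ! i = z" by auto
    then show "i = k" using c unfolding cz_def by blast
  qed
  ultimately show "cz z (take n w) k \<and> z \<notin> set (drop n w)" by simp
next
  assume h: "cz z (take n w) k \<and> z \<notin> set (drop n w)"
  have h1: "k < length (take n w)" "take n w ! k = z"
    and hall: "\<And>i. i < length (take n w) \<Longrightarrow> take n w ! i = z \<Longrightarrow> i = k"
    using h unfolding cz_def by blast+
  show "cz z w k" unfolding cz_def
  proof (intro conjI allI impI)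
    show "k < length w" using h1 by simp
    show "w ! k = z" using h1 assms by simp
    fix i assume i: "i < length w" "w ! i = z"
    show "i = k"
    proof (cases "i < n")
      case True
      then have "i < length (take n w)" "take n w ! i = z" using i by simp_all
      then show ?thesis by (rule hall)
    next
      case False
      then have "drop n w ! (i - n) = z" using i assms by simp
      moreover have "i - n < length (drop n w)" using i False by simp
      ultimately have "z \<in> set (drop n w)" by (metis nth_mem)
      then show ?thesis using h by simp
    qed
  qed
qed


definition Lz :: "'x \<Rightarrow> ('x, 'k::field) as_elem \<Rightarrow> ('x, 'k) dias_elem" where
  "Lz z a = (\<lambda>(w, k). if cz z w k then a w else 0)"

definition Z0 :: "'x \<Rightarrow> ('x, 'k::field) as_elem \<Rightarrow> ('x, 'k) as_elem" where
  "Z0 z a = (\<lambda>w. if z \<in> set w then 0 else a w)"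

lemma sum_shift_if:
  "(\<Sum>k<(L::nat). if n \<le> k then g (k - n) else 0) = (\<Sum>j<L - n. (g j :: 'a::comm_monoid_add))"
proof (induction L)
  case 0 then show ?case by simp
next
  case (Suc L)
  show ?case
  proof (cases "n \<le> L")
    case True
    then have "Suc L - n = Suc (L - n)" by simp
    then show ?thesis using Suc True by (simp add: Suc_diff_le)
  next
    case False
    then show ?thesis using Suc by simp
  qed
qed

lemma sum_restrict_less:
  assumes "n \<le> (L::nat)"
  shows "(\<Sum>k<L. if k < n then g k else 0) = (\<Sum>k<n. (g k :: 'a::comm_monoid_add))"
proof -
  have "(\<Sum>k<L. if k < n then g k else 0) = sum g {k\<in>{..<L}. k < n}"
    by (simp only: sum.inter_filter[OF finite_lessThan])
  also have "{k\<in>{..<L}. k < n} = {..<n}" using assms by auto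
  finally show ?thesis .
qed

lemma dibar_vdash: "dibar (di_vdash a b) = as_mult (dibar a) (dibar b)"
proof (rule ext)
  fix w :: "'a list"
  let ?L = "length w"
  have "dibar (di_vdash a b) w = (\<Sum>k<?L. \<Sum>n\<le>?L.
      if n \<le> k \<and> k < ?L then (\<Sum>i<n. a (take n w, i)) * b (drop n w, k - n) else 0)"
    unfolding dibar_def di_vdash_def by simp
  also have "\<dots> = (\<Sum>n\<le>?L. \<Sum>k<?L.
      if n \<le> k then (\<Sum>i<n. a (take n w, i)) * b (drop n w, k - n) else 0)"
    by (subst sum.swap) (auto intro!: sum.cong)
  also have "\<dots> = (\<Sum>n\<le>?L. (\<Sum>i<n. a (take n w, i)) * (\<Sum>k<?L. if n \<le> k then b (drop n w, k - n) else 0))"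
    by (auto simp: sum_distrib_left if_distrib intro!: sum.cong)
  also have "\<dots> = (\<Sum>n\<le>?L. dibar a (take n w) * dibar b (drop n w))"
  proof (rule sum.cong)
    fix n assume n: "n \<in> {..?L}"
    have "(\<Sum>k<?L. if n \<le> k then b (drop n w, k - n) else 0) = (\<Sum>j<?L - n. b (drop n w, j))"
      by (rule sum_shift_if)
    moreover have "(\<Sum>i<n. a (take n w, i)) = dibar a (take n w)"
      using n by (simp add: dibar_def min_absorb2)
    ultimately show "(\<Sum>i<n. a (take n w, i)) * (\<Sum>k<?L. if n \<le> k then b (drop n w, k - n) else 0)
        = dibar a (take n w) * dibar b (drop n w)" by (simp add: dibar_def)
  qed simp
  finally show "dibar (di_vdash a b) w = as_mult (dibar a) (dibar b) w"
    unfolding as_mult_def by simp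
qed

lemma dibar_dashv: "dibar (di_dashv a b) = as_mult (dibar a) (dibar b)"
proof (rule ext)
  fix w :: "'a list"
  let ?L = "length w"
  have "dibar (di_dashv a b) w = (\<Sum>k<?L. \<Sum>n\<le>?L.
      if k < n then a (take n w, k) * (\<Sum>j<?L - n. b (drop n w, j)) else 0)"
    unfolding dibar_def di_dashv_def by simp
  also have "\<dots> = (\<Sum>n\<le>?L. \<Sum>k<?L.
      if k < n then a (take n w, k) * (\<Sum>j<?L - n. b (drop n w, j)) else 0)"
    by (rule sum.swap)
  also have "\<dots> = (\<Sum>n\<le>?L. (\<Sum>k<n. a (take n w, k)) * (\<Sum>j<?L - n. b (drop n w, j)))"
    by (auto simp: sum_restrict_less sum_distrib_right intro!: sum.cong)
  also have "\<dots> = (\<Sum>n\<le>?L. dibar a (take n w) * dibar b (drop n w))"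
    unfolding dibar_def by (auto simp: min_absorb2 intro!: sum.cong)
  finally show "dibar (di_dashv a b) w = as_mult (dibar a) (dibar b) w"
    unfolding as_mult_def by simp
qed

lemma dibar_add: "dibar (di_add a b) = as_add (dibar a) (dibar b)"
  by (auto simp: dibar_def di_add_def as_add_def sum.distrib)

lemma dibar_smult: "dibar (di_smult c a) = as_smult c (dibar a)"
  by (auto simp: dibar_def di_smult_def as_smult_def sum_distrib_left)

lemma dibar_vdash_plus: "dibar (di_vdash_plus a b) = as_jordan (dibar a) (dibar b)"
  by (simp add: di_vdash_plus_def as_jordan_def dibar_add dibar_smult dibar_vdash dibar_dashv)

lemma dibar_dashv_plus: "dibar (di_dashv_plus a b) = as_jordan (dibar a) (dibar b)"
  by (simp add: di_dashv_plus_def as_jordan_def dibar_add dibar_smult dibar_vdash dibar_dashv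
      as_add_def add.commute)

lemma dibar_letter: "dibar (di_letter x) = as_letter x"
proof (rule ext)
  fix w :: "'a list"
  show "dibar (di_letter x) w = as_letter x w"
  proof (cases "w = [x]")
    case True then show ?thesis by (simp add: dibar_def di_letter_def as_letter_def)
  next
    case False then show ?thesis by (simp add: dibar_def di_letter_def as_letter_def)
  qed
qed

lemma forward: "f \<in> DiSJ X \<Longrightarrow> dibar f \<in> SJ X"
proof (induction rule: DiSJ.induct)
  case (DiSJ_gen x) then show ?case by (simp add: dibar_letter SJ.SJ_gen)
next
  case DiSJ_zero
  show ?case by (simp add: dibar_def SJ.SJ_zero)
next
  case (DiSJ_add a b) then show ?case by (simp add: dibar_add SJ.SJ_add)
next
  case (DiSJ_smult a c) then show ?case by (simp add: dibar_smult SJ.SJ_smult)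
next
  case (DiSJ_vdash a b) then show ?case by (simp add: dibar_vdash_plus SJ.SJ_jordan)
next
  case (DiSJ_dashv a b) then show ?case by (simp add: dibar_dashv_plus SJ.SJ_jordan)
qed


lemma term_eq:
  assumes "n \<le> length w"
  shows "(if cz z w k then a (take n w) * b (drop n w) else 0) =
    (if n \<le> k \<and> k < length w then Z0 z a (take n w) * Lz z b (drop n w, k - n) else 0) +
    (if k < n then Lz z a (take n w, k) * Z0 z b (drop n w) else (0::'k::field))"
proof (cases "n \<le> k")
  case True
  have c: "cz z w k \<longleftrightarrow> z \<notin> set (take n w) \<and> cz z (drop n w) (k - n)"
    using cz_right[OF True assms] .
  show ?thesis
  proof (cases "k < length w")
    case True
    with \<open>n \<le> k\<close> c show ?thesis by (auto simp: Z0_def Lz_def)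
  next
    case False
    then have "\<not> cz z w k" by (simp add: cz_def)
    with False \<open>n \<le> k\<close> show ?thesis by simp
  qed
next
  case False
  then have kn: "k < n" by simp
  have c: "cz z w k \<longleftrightarrow> cz z (take n w) k \<and> z \<notin> set (drop n w)"
    using cz_left[OF kn assms] .
  show ?thesis using False kn c by (auto simp: Z0_def Lz_def)
qed

lemma Lz_mult:
  assumes da: "dibar da = Z0 z a" and db: "dibar db = Z0 z b"
  shows "Lz z (as_mult a b) = di_add (di_vdash da (Lz z b)) (di_dashv (Lz z a) db)"
proof (rule ext)
  fix p :: "'a list \<times> nat"
  obtain w k where p: "p = (w, k)" by (cases p)
  let ?L = "length w"
  have "Lz z (as_mult a b) (w, k) = (\<Sum>n\<le>?L. if cz z w k then a (take n w) * b (drop n w) else 0)"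
    by (simp add: Lz_def as_mult_def)
  also have "\<dots> = (\<Sum>n\<le>?L.
    (if n \<le> k \<and> k < ?L then Z0 z a (take n w) * Lz z b (drop n w, k - n) else 0) +
    (if k < n then Lz z a (take n w, k) * Z0 z b (drop n w) else 0))"
    by (rule sum.cong[OF refl], rule term_eq) simp
  also have "\<dots> = di_add (di_vdash da (Lz z b)) (di_dashv (Lz z a) db) (w, k)"
  proof -
    have e1: "(\<Sum>i<n. da (take n w, i)) = Z0 z a (take n w)" if "n \<le> ?L" for n
      using that da[symmetric] by (simp add: dibar_def min_absorb2)
    have e2: "(\<Sum>j<?L - n. db (drop n w, j)) = Z0 z b (drop n w)" for n
      using db[symmetric] by (simp add: dibar_def fun_eq_iff)
    have s1: "(\<Sum>n\<le>?L. if n \<le> k \<and> k < ?L then Z0 z a (take n w) * Lz z b (drop n w, k - n) else 0)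
      = (\<Sum>n\<le>?L. if n \<le> k \<and> k < ?L then (\<Sum>i<n. da (take n w, i)) * Lz z b (drop n w, k - n) else 0)"
      by (rule sum.cong[OF refl]) (simp add: e1)
    have s2: "(\<Sum>n\<le>?L. if k < n then Lz z a (take n w, k) * Z0 z b (drop n w) else 0)
      = (\<Sum>n\<le>?L. if k < n then Lz z a (take n w, k) * (\<Sum>j<?L - n. db (drop n w, j)) else 0)"
      by (rule sum.cong[OF refl]) (simp add: e2)
    show ?thesis
      unfolding di_add_def di_vdash_def di_dashv_def
      by (simp only: sum.distrib s1 s2 prod.case)
  qed
  finally show "Lz z (as_mult a b) p = di_add (di_vdash da (Lz z b)) (di_dashv (Lz z a) db) p"
    using p by simp
qed


lemma Lz_add: "Lz z (as_add a b) = di_add (Lz z a) (Lz z b)"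
  by (auto simp: Lz_def as_add_def di_add_def fun_eq_iff)

lemma Lz_smult: "Lz z (as_smult c a) = di_smult c (Lz z a)"
  by (auto simp: Lz_def as_smult_def di_smult_def fun_eq_iff)

lemma Z0_add: "Z0 z (as_add a b) = as_add (Z0 z a) (Z0 z b)"
  by (auto simp: Z0_def as_add_def fun_eq_iff)

lemma Z0_smult: "Z0 z (as_smult c a) = as_smult c (Z0 z a)"
  by (auto simp: Z0_def as_smult_def fun_eq_iff)

lemma Z0_mult: "Z0 z (as_mult a b) = as_mult (Z0 z a) (Z0 z b)"
proof (rule ext)
  fix w :: "'a list"
  show "Z0 z (as_mult a b) w = as_mult (Z0 z a) (Z0 z b) w"
  proof (cases "z \<in> set w")
    case True
    have h: "Z0 z a (take n w) * Z0 z b (drop n w) = 0" for n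
    proof -
      have "z \<in> set (take n w) \<or> z \<in> set (drop n w)"
        using True by (metis Un_iff append_take_drop_id set_append)
      then show ?thesis by (auto simp: Z0_def)
    qed
    have "as_mult (Z0 z a) (Z0 z b) w = 0" by (simp add: as_mult_def h)
    moreover have "Z0 z (as_mult a b) w = 0" using True by (simp add: Z0_def)
    ultimately show ?thesis by simp
  next
    case False
    then have "z \<notin> set (take n w)" "z \<notin> set (drop n w)" for n
      by (meson in_set_takeD in_set_dropD)+
    then show ?thesis using False by (simp add: Z0_def as_mult_def)
  qed
qed

lemma Z0_jordan: "Z0 z (as_jordan a b) = as_jordan (Z0 z a) (Z0 z b)"
  by (simp add: as_jordan_def Z0_add Z0_smult Z0_mult)

lemma Lz_jordan:
  assumes da: "dibar da = Z0 z a" and db: "dibar db = Z0 z b"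
  shows "Lz z (as_jordan a b) = di_add (di_vdash_plus da (Lz z b)) (di_vdash_plus db (Lz z a))"
  unfolding as_jordan_def Lz_smult Lz_add Lz_mult[OF da db] Lz_mult[OF db da]
  by (simp add: di_vdash_plus_def di_add_def di_smult_def fun_eq_iff algebra_simps)

lemma Lz_zero: "Lz z (\<lambda>w. 0) = (\<lambda>p. 0)"
  by (auto simp: Lz_def fun_eq_iff)

lemma Lz_letter_z: "Lz z (as_letter z) = di_letter z"
  by (auto simp: Lz_def as_letter_def di_letter_def cz_def fun_eq_iff)

lemma Lz_letter_other: "x \<noteq> z \<Longrightarrow> Lz z (as_letter x) = (\<lambda>p. 0)"
  by (auto simp: Lz_def as_letter_def cz_def fun_eq_iff)

lemma backward_aux:
  "a \<in> SJ X \<Longrightarrow> Lz z a \<in> DiSJ X \<and> (\<exists>d\<in>DiSJ X. dibar d = Z0 z a)"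
proof (induction rule: SJ.induct)
  case (SJ_gen x)
  show ?case
  proof (cases "x = z")
    case True
    have "Z0 z (as_letter x) = (\<lambda>w. 0)" using True by (auto simp: Z0_def as_letter_def fun_eq_iff)
    moreover have "dibar (\<lambda>p. 0) = (\<lambda>w. 0)" by (simp add: dibar_def fun_eq_iff)
    ultimately show ?thesis using True SJ_gen Lz_letter_z DiSJ.DiSJ_gen DiSJ.DiSJ_zero by metis
  next
    case False
    have "Z0 z (as_letter x) = as_letter x" using False by (auto simp: Z0_def as_letter_def fun_eq_iff)
    show ?thesis
    proof
      show "Lz z (as_letter x) \<in> DiSJ X" unfolding Lz_letter_other[OF False] by (rule DiSJ.DiSJ_zero)
      show "\<exists>d\<in>DiSJ X. dibar d = Z0 z (as_letter x)"
        using \<open>Z0 z (as_letter x) = as_letter x\<close> dibar_letter DiSJ.DiSJ_gen[OF SJ_gen] by metis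
    qed
  qed
next
  case SJ_zero
  show ?case
  proof
    show "Lz z (\<lambda>w. 0) \<in> DiSJ X" unfolding Lz_zero by (rule DiSJ.DiSJ_zero)
    show "\<exists>d\<in>DiSJ X. dibar d = Z0 z (\<lambda>w. 0)"
      by (rule bexI[OF _ DiSJ.DiSJ_zero]) (simp add: dibar_def Z0_def fun_eq_iff)
  qed
next
  case (SJ_add a b)
  then obtain da db where "da \<in> DiSJ X" "db \<in> DiSJ X" "dibar da = Z0 z a" "dibar db = Z0 z b" by blast
  then show ?case using SJ_add
    by (metis Lz_add Z0_add dibar_add DiSJ.DiSJ_add)
next
  case (SJ_smult a c)
  then obtain da where "da \<in> DiSJ X" "dibar da = Z0 z a" by blast
  then show ?case using SJ_smult
    by (metis Lz_smult Z0_smult dibar_smult DiSJ.DiSJ_smult)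
next
  case (SJ_jordan a b)
  then obtain da db where d: "da \<in> DiSJ X" "db \<in> DiSJ X" "dibar da = Z0 z a" "dibar db = Z0 z b" by blast
  have "Lz z (as_jordan a b) \<in> DiSJ X"
    unfolding Lz_jordan[OF d(3,4)] using d SJ_jordan
    by (intro DiSJ.DiSJ_add DiSJ.DiSJ_vdash) auto
  moreover have "dibar (di_vdash_plus da db) = Z0 z (as_jordan a b)"
    by (simp add: dibar_vdash_plus d Z0_jordan)
  ultimately show ?case using d DiSJ.DiSJ_vdash by blast
qed

lemma Lz_dibar:
  assumes "f \<in> DiAs_z X z"
  shows "Lz z (dibar f) = f"
proof (rule ext)
  fix p :: "'a list \<times> nat"
  obtain w k where p: "p = (w, k)" by (cases p)
  have F: "f (w, i) \<noteq> 0 \<Longrightarrow> set w \<subseteq> X \<and> i < length w \<and> w ! i = z \<and> count_list w z = 1" for i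
    using assms by (simp add: DiAs_z_def)
  have cnt: "cz z w i" if "f (w, i) \<noteq> 0" for i
  proof -
    have i: "i < length w" "w ! i = z" "count_list w z = 1" using F[OF that] by auto
    have w: "w = take i w @ z # drop (Suc i) w" using i by (metis id_take_nth_drop)
    have "count_list w z = count_list (take i w) z + 1 + count_list (drop (Suc i) w) z"
      by (subst w) simp
    then have "z \<notin> set (take i w)" "z \<notin> set (drop (Suc i) w)" using i(3)
      by (simp_all add: count_list_0_iff)
    show ?thesis unfolding cz_def
    proof (intro conjI allI impI)
      show "i < length w" "w ! i = z" using i by auto
      fix j assume j: "j < length w" "w ! j = z"
      show "j = i"
      proof (rule ccontr)
        assume "j \<noteq> i"
        then consider "j < i" | "i < j" by linarith
        then show False
        proof cases
          case 1
          then have "take i w ! j = z" using j by simp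
          then have "z \<in> set (take i w)" using 1 i j by (metis in_set_conv_nth length_take min_less_iff_conj)
          then show False using \<open>z \<notin> set (take i w)\<close> by simp
        next
          case 2
          then have "drop (Suc i) w ! (j - Suc i) = z" using j by simp
          moreover have "j - Suc i < length (drop (Suc i) w)" using 2 j by simp
          ultimately have "z \<in> set (drop (Suc i) w)" by (metis nth_mem)
          then show False using \<open>z \<notin> set (drop (Suc i) w)\<close> by simp
        qed
      qed
    qed
  qed
  show "Lz z (dibar f) p = f p"
  proof (cases "cz z w k")
    case True
    have "(\<Sum>i<length w. f (w, i)) = f (w, k) + (\<Sum>i\<in>{..<length w} - {k}. f (w, i))"
      by (rule sum.remove) (use True in \<open>auto simp: cz_def\<close>)
    also have "(\<Sum>i\<in>{..<length w} - {k}. f (w, i)) = 0"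
      by (rule sum.neutral) (use cnt True in \<open>auto simp: cz_def\<close>)
    finally have "(\<Sum>i<length w. f (w, i)) = f (w, k)" by simp
    then show ?thesis using True p by (simp add: Lz_def dibar_def)
  next
    case False
    then have "f (w, k) = 0" using cnt by blast
    then show ?thesis using False p by (simp add: Lz_def)
  qed
qed

theorem mainTheorem10:
  fixes X :: "'x set" and z :: 'x and f :: "('x, 'k::field) dias_elem"
  assumes "(2::'k) \<noteq> 0" and "z \<in> X" and "f \<in> DiAs_z X z"
  shows "f \<in> DiSJ X \<longleftrightarrow> dibar f \<in> SJ X"
proof
  assume "f \<in> DiSJ X" then show "dibar f \<in> SJ X" by (rule forward)
next
  assume "dibar f \<in> SJ X"
  then have "Lz z (dibar f) \<in> DiSJ X" using backward_aux[of "dibar f" X z] by blast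
  then show "f \<in> DiSJ X" using Lz_dibar[OF assms(3)] by simp
qed

end
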